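(* Let $H$ be a right Hilbert module over a $C^*$-algebra and let $Q\in\mathcal{L}(H)$ be an idempotent. Then $m(I-Q)=I-m(Q)$.
   Context: $\mathcal{L}(H)$ denotes the $C^*$-algebra of all adjointable operators on $H$, $I$ is the identity operator on $H$, $T^*$ is the adjoint of $T$, and $|T|=(T^*T)^{1/2}$ is the positive square root. $Q$ is an idempotent if $Q^2=Q$, and a projection if moreover $Q^*=Q$. For $T\in\mathcal{L}(H)$ with closed range, $T^\dagger$ denotes its Moore–Penrose inverse (the unique $X\in\mathcal{L}(H)$ with $TXT=T$, $XTX=X$, $(TX)^*=TX$, $(XT)^*=XT$). The matched projection of an idempotent $Q\in\mathcal{L}(H)$ is defined by $$m(Q)=\tfrac12\big(|Q^*|+Q^*\big)|Q^*|^\dagger\big(|Q^*|+I\big)^{-1}\big(|Q^*|+Q\big)$$ (here $|Q^*|$ has closed range, so $|Q^*|^\dagger$ exists); it is a projection. *)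

theory Defs
  imports "HOL-Analysis.Analysis"
begin

text \<open>The algebra L(H) of adjointable operators on a
Hilbert C*-module H is a unital C*-algebra, and conversely every unital C*-algebra A
is L(A_A); so the statement is phrased for an arbitrary unital C*-algebra.\<close>

class cstar_algebra = real_normed_algebra_1 + banach +
  fixes cstar :: "'a \<Rightarrow> 'a"
    and cscale :: "complex \<Rightarrow> 'a \<Rightarrow> 'a"
  assumes cstar_invol: "cstar (cstar x) = x"
    and cstar_add: "cstar (x + y) = cstar x + cstar y"
    and cstar_mult: "cstar (x * y) = cstar y * cstar x"
    and cstar_cscale: "cstar (cscale c x) = cscale (cnj c) (cstar x)"
    and cscale_add_right: "cscale c (x + y) = cscale c x + cscale c y"
    and cscale_add_left: "cscale (a + b) x = cscale a x + cscale b x"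
    and cscale_assoc: "cscale a (cscale b x) = cscale (a * b) x"
    and cscale_of_real: "cscale (complex_of_real r) x = scaleR r x"
    and norm_cscale: "norm (cscale c x) = cmod c * norm x"
    and cscale_left_mult: "cscale c x * y = cscale c (x * y)"
    and cscale_right_mult: "x * cscale c y = cscale c (x * y)"
    and cstar_identity: "norm (cstar x * x) = norm x ^ 2"

definition cstar_positive :: "'a::cstar_algebra \<Rightarrow> bool" where
  "cstar_positive p \<longleftrightarrow> (\<exists>y. p = cstar y * y)"

definition cabs :: "'a::cstar_algebra \<Rightarrow> 'a" where
  "cabs T = (THE p. cstar_positive p \<and> p * p = cstar T * T)"

definition mp_inv :: "'a::cstar_algebra \<Rightarrow> 'a" where
  "mp_inv T = (THE X. T * X * T = T \<and> X * T * X = X \<and>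
                      cstar (T * X) = T * X \<and> cstar (X * T) = X * T)"

definition ainv :: "'a::cstar_algebra \<Rightarrow> 'a" where
  "ainv T = (THE Y. T * Y = 1 \<and> Y * T = 1)"

definition matched_proj :: "'a::cstar_algebra \<Rightarrow> 'a" where
  "matched_proj Q = scaleR (1/2)
     ((cabs (cstar Q) + cstar Q) * mp_inv (cabs (cstar Q))
       * ainv (cabs (cstar Q) + 1) * (cabs (cstar Q) + Q))"

end

theory Submission
  imports Defs "HOL-Computational_Algebra.Formal_Power_Series"
begin

lemma cstar_zero[simp]: "cstar (0::'a::cstar_algebra) = 0"
  by (metis add_cancel_right_right cstar_add)

lemma cstar_one[simp]: "cstar (1::'a::cstar_algebra) = 1"
proof -
  have "cstar (cstar (1::'a)) = cstar (cstar 1 * 1)" by simp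
  also have "\<dots> = cstar 1 * cstar (cstar 1)" by (rule cstar_mult)
  also have "\<dots> = cstar 1" by (simp add: cstar_invol)
  finally show ?thesis by (simp add: cstar_invol)
qed

lemma cstar_minus[simp]: "cstar (- x) = - cstar (x::'a::cstar_algebra)"
  by (metis add.right_inverse add_eq_0_iff cstar_add cstar_zero)

lemma cstar_diff[simp]: "cstar (x - y) = cstar x - cstar (y::'a::cstar_algebra)"
  by (metis cstar_add cstar_minus diff_conv_add_uminus)

lemma cstar_scaleR[simp]: "cstar (scaleR r x) = scaleR r (cstar (x::'a::cstar_algebra))"
  by (metis complex_cnj_complex_of_real cscale_of_real cstar_cscale)

lemma cstar_inj: "cstar x = cstar y \<Longrightarrow> x = (y::'a::cstar_algebra)"
  by (metis cstar_invol)

lemma norm_cstar[simp]: "norm (cstar x) = norm (x::'a::cstar_algebra)"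
proof -
  have le: "norm z \<le> norm (cstar z)" for z :: 'a
  proof (cases "z = 0")
    case True thus ?thesis by simp
  next
    case False
    have "norm z ^ 2 = norm (cstar z * z)" by (simp add: cstar_identity)
    also have "\<dots> \<le> norm (cstar z) * norm z" by (rule norm_mult_ineq)
    finally have "norm z * norm z \<le> norm (cstar z) * norm z" by (simp add: power2_eq_square)
    thus ?thesis using False by simp
  qed
  show ?thesis using le[of x] le[of "cstar x"] by (simp add: cstar_invol)
qed

lemma bounded_linear_cstar: "bounded_linear (cstar :: 'a::cstar_algebra \<Rightarrow> 'a)"
  by (rule bounded_linear_intro[where K=1]) (auto simp: cstar_add)

lemma cstar_suminf: "summable f \<Longrightarrow> cstar (suminf f) = (\<Sum>n. cstar (f n :: 'a::cstar_algebra))"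
  using bounded_linear.suminf[OF bounded_linear_cstar] by metis

lemma suminf_commute:
  fixes f :: "nat \<Rightarrow> 'a::cstar_algebra"
  assumes "summable f" "\<And>n. x * f n = f n * x"
  shows "x * suminf f = suminf f * x"
  using assms by (simp add: suminf_mult[symmetric] suminf_mult2)

lemma sa_sq_norm: "cstar h = h \<Longrightarrow> norm (h * h) = norm (h::'a::cstar_algebra) ^ 2"
  by (metis cstar_identity)

lemma sa_zero_sq: "cstar h = h \<Longrightarrow> h * h = 0 \<Longrightarrow> h = (0::'a::cstar_algebra)"
  by (metis sa_sq_norm norm_zero norm_eq_zero power_eq_0_iff)

lemma cstar_zero_iff: "cstar x * x = 0 \<Longrightarrow> x = (0::'a::cstar_algebra)"
  by (metis cstar_identity norm_zero norm_eq_zero power_eq_0_iff)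

definition ci :: "'a::cstar_algebra \<Rightarrow> 'a" where "ci x = cscale \<i> x"

lemma cscale_minus_one: "cscale (-1) x = - (x::'a::cstar_algebra)"
proof -
  have "cscale (complex_of_real (-1)) x = (-1) *\<^sub>R x" by (rule cscale_of_real)
  thus ?thesis by simp
qed

lemma ci_ci[simp]: "ci (ci x) = - (x::'a::cstar_algebra)"
proof -
  have "ci (ci x) = cscale (-1) x" unfolding ci_def by (simp add: cscale_assoc)
  thus ?thesis by (simp add: cscale_minus_one)
qed

lemma cstar_ci[simp]: "cstar (ci x) = - ci (cstar (x::'a::cstar_algebra))"
proof -
  have "cstar (ci x) = cscale (- \<i>) (cstar x)" unfolding ci_def by (simp add: cstar_cscale)
  also have "\<dots> = cscale (-1) (cscale \<i> (cstar x))" using cscale_assoc[of "-1" "\<i>" "cstar x"] by simp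
  also have "\<dots> = - ci (cstar x)" unfolding ci_def by (simp add: cscale_minus_one)
  finally show ?thesis .
qed

lemma ci_add[simp]: "ci (x + y) = ci x + ci (y::'a::cstar_algebra)"
  by (simp add: ci_def cscale_add_right)
lemma ci_zero[simp]: "ci (0::'a::cstar_algebra) = 0"
  by (metis add_cancel_right_right ci_add)
lemma ci_minus[simp]: "ci (- x) = - ci (x::'a::cstar_algebra)"
  by (metis add.right_inverse add_eq_0_iff ci_add ci_zero)
lemma ci_diff[simp]: "ci (x - y) = ci x - ci (y::'a::cstar_algebra)"
  by (metis ci_add ci_minus diff_conv_add_uminus)
lemma ci_mult_left[simp]: "ci x * y = ci (x * (y::'a::cstar_algebra))"
  by (simp add: ci_def cscale_left_mult)
lemma ci_mult_right[simp]: "x * ci y = ci (x * (y::'a::cstar_algebra))"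
  by (simp add: ci_def cscale_right_mult)
lemma norm_ci[simp]: "norm (ci x) = norm (x::'a::cstar_algebra)"
  by (simp add: ci_def norm_cscale)
lemma ci_scaleR[simp]: "ci (scaleR r x) = scaleR r (ci (x::'a::cstar_algebra))"
  unfolding ci_def by (metis cscale_assoc cscale_of_real mult.commute)

definition bc :: "nat \<Rightarrow> real" where "bc k = ((1/2::real) gchoose k) * (-1)^k"

definition bS :: "nat \<Rightarrow> real" where "bS m = ((of_nat m - 1/2) gchoose m)"

lemma bS_nonneg: "bS m \<ge> 0"
proof -
  have "fact m * bS m = (\<Prod>i = 0..<m. (of_nat m - 1/2) - of_nat i)"
    unfolding bS_def by (rule gbinomial_mult_fact)
  also have "\<dots> > 0" by (rule prod_pos) auto
  finally show ?thesis by (metis fact_gt_zero less_eq_real_def zero_less_mult_pos)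
qed

lemma bc_partial: "(\<Sum>k\<le>m. bc k) = bS m"
proof -
  have "(\<Sum>k\<le>m. bc k) = (-1)^m * ((1/2 - 1) gchoose m)"
    unfolding bc_def by (rule gbinomial_sum_lower_neg)
  also have "(1/2 - 1 :: real) = - (1/2)" by simp
  also have "((- (1/2)) gchoose m) = (-1)^m * ((1/2 + of_nat m - 1) gchoose m)"
    by (rule gbinomial_minus)
  also have "(-1::real)^m * ((-1)^m * ((1/2 + of_nat m - 1) gchoose m)) = ((1/2 + of_nat m - 1) gchoose m)"
    by (simp add: power_mult_distrib[symmetric])
  also have "(1/2 + of_nat m - 1 :: real) = of_nat m - 1/2" by simp
  finally show ?thesis unfolding bS_def .
qed

lemma bc_0[simp]: "bc 0 = 1" by (simp add: bc_def)

lemma bc_neg: "bc (Suc j) < 0"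
proof -
  have "(-1)^(Suc j) * (\<Prod>i = 0..<Suc j. (1/2::real) - of_nat i) < 0"
  proof (induction j)
    case 0 then show ?case by simp
  next
    case (Suc j)
    have "(-1::real)^(Suc (Suc j)) * (\<Prod>i = 0..<Suc (Suc j). 1/2 - of_nat i)
        = ((-1)^(Suc j) * (\<Prod>i = 0..<Suc j. 1/2 - of_nat i)) * (of_nat (Suc j) - 1/2)"
    proof -
      define P where "P = (\<Prod>i = 0..<Suc j. (1/2::real) - of_nat i)"
      define m where "m = ((-1::real)^(Suc j))"
      have "(\<Prod>i = 0..<Suc (Suc j). (1/2::real) - of_nat i) = P * (1/2 - of_nat (Suc j))"
        unfolding P_def by (rule prod.atLeast0_lessThan_Suc)
      moreover have "(-1::real)^(Suc (Suc j)) = - m" unfolding m_def by simp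
      moreover have "\<And>x::real. (- m) * (P * (1/2 - x)) = (m * P) * (x - 1/2)" by (simp add: algebra_simps)
      ultimately show ?thesis unfolding P_def[symmetric] m_def[symmetric] by metis
    qed
    also have "\<dots> < 0" by (rule mult_neg_pos[OF Suc.IH]) simp
    finally show ?case .
  qed
  moreover have "fact (Suc j) * bc (Suc j) = (-1)^(Suc j) * (\<Prod>i = 0..<Suc j. (1/2::real) - of_nat i)"
  proof -
    have "fact (Suc j) * bc (Suc j) = (-1)^(Suc j) * (fact (Suc j) * ((1/2::real) gchoose Suc j))"
      unfolding bc_def by (simp only: mult_ac)
    thus ?thesis by (simp only: gbinomial_mult_fact)
  qed
  ultimately have "fact (Suc j) * bc (Suc j) < 0" by simp
  moreover have "(0::real) < fact (Suc j)" by (rule fact_gt_zero)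
  ultimately show ?thesis by (simp add: mult_less_0_iff)
qed

lemma bc_abs_Suc: "\<bar>bc (Suc j)\<bar> = - bc (Suc j)"
  using bc_neg[of j] by simp

lemma bc_tail_partial: "(\<Sum>k<n. \<bar>bc (Suc k)\<bar>) = 1 - bS n"
proof -
  have "(\<Sum>k<Suc n. bc k) = bc 0 + (\<Sum>k<n. bc (Suc k))" by (rule sum.lessThan_Suc_shift)
  moreover have "(\<Sum>k<Suc n. bc k) = bS n" using bc_partial[of n] by (simp add: lessThan_Suc_atMost)
  ultimately show ?thesis by (simp add: bc_abs_Suc sum_negf)
qed

lemma bc_tail_summable: "summable (\<lambda>k. \<bar>bc (Suc k)\<bar>)"
  by (rule summableI_nonneg_bounded[where x=1]) (use bc_tail_partial bS_nonneg in auto)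

lemma bc_tail_le: "(\<Sum>k. \<bar>bc (Suc k)\<bar>) \<le> 1"
  by (rule suminf_le_const[OF bc_tail_summable]) (use bc_tail_partial bS_nonneg in auto)

lemma bc_summable: "summable (\<lambda>k. \<bar>bc k\<bar>)"
  using bc_tail_summable summable_Suc_iff by blast

lemma bc_cauchy: "(\<Sum>i\<le>k. bc i * bc (k - i)) = (if k = 0 then 1 else if k = 1 then -1 else 0)"
proof -
  have "(\<Sum>i\<le>k. bc i * bc (k - i)) = (\<Sum>i\<le>k. ((1/2::real) gchoose i) * ((1/2) gchoose (k - i)) * (-1)^k)"
  proof (rule sum.cong)
    fix i assume "i \<in> {..k}"
    hence "(-1::real)^i * (-1)^(k-i) = (-1)^k" by (simp add: power_add[symmetric])
    thus "bc i * bc (k - i) = ((1/2::real) gchoose i) * ((1/2) gchoose (k - i)) * (-1)^k"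
      unfolding bc_def by (metis (no_types, lifting) mult.assoc mult.left_commute)
  qed simp
  also have "\<dots> = (\<Sum>i\<in>{0..k}. ((1/2::real) gchoose i) * ((1/2) gchoose (k - i))) * (-1)^k"
    by (simp add: sum_distrib_right atLeast0AtMost)
  also have "\<dots> = ((1/2 + 1/2 :: real) gchoose k) * (-1)^k"
    by (simp only: gbinomial_Vandermonde)
  also have "\<dots> = of_nat (1 choose k) * (-1)^k"
    using binomial_gbinomial[of 1 k, where 'a=real] by simp
  also have "\<dots> = (if k = 0 then 1 else if k = 1 then -1 else 0)"
    by (cases k) (auto simp: binomial_eq_0)
  finally show ?thesis .
qed

definition bsq :: "'a::cstar_algebra \<Rightarrow> 'a" where "bsq x = (\<Sum>k. bc k *\<^sub>R x ^ k)"

lemma bsq_summable_norm: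
  fixes x :: "'a::cstar_algebra"
  assumes "norm x \<le> 1"
  shows "summable (\<lambda>k. norm (bc k *\<^sub>R x ^ k))"
proof (rule summable_comparison_test[OF _ bc_summable])
  show "\<exists>N. \<forall>n\<ge>N. norm (norm (bc n *\<^sub>R x ^ n)) \<le> \<bar>bc n\<bar>"
  proof (intro exI allI impI)
    fix n :: nat
    have "norm (x ^ n) \<le> norm x ^ n" by (rule norm_power_ineq)
    also have "\<dots> \<le> 1" using assms by (simp add: power_le_one)
    finally have "norm (x ^ n) \<le> 1" .
    hence "\<bar>bc n\<bar> * norm (x ^ n) \<le> \<bar>bc n\<bar>" by (simp add: mult_left_le)
    thus "norm (norm (bc n *\<^sub>R x ^ n)) \<le> \<bar>bc n\<bar>" by simp
  qed
qed

lemma bsq_summable: "norm (x::'a::cstar_algebra) \<le> 1 \<Longrightarrow> summable (\<lambda>k. bc k *\<^sub>R x ^ k)"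
  by (rule summable_norm_cancel[OF bsq_summable_norm])

lemma bsq_sq:
  fixes x :: "'a::cstar_algebra"
  assumes "norm x \<le> 1"
  shows "bsq x * bsq x = 1 - x"
proof -
  have "bsq x * bsq x = (\<Sum>k. \<Sum>i\<le>k. (bc i *\<^sub>R x ^ i) * (bc (k - i) *\<^sub>R x ^ (k - i)))"
    unfolding bsq_def by (rule Cauchy_product[OF bsq_summable_norm[OF assms] bsq_summable_norm[OF assms]])
  also have "\<dots> = (\<Sum>k. (if k = 0 then 1 else 0) + (if k = 1 then - x else 0))"
  proof (rule suminf_cong)
    fix k
    have "(\<Sum>i\<le>k. (bc i *\<^sub>R x ^ i) * (bc (k - i) *\<^sub>R x ^ (k - i))) = (\<Sum>i\<le>k. (bc i * bc (k - i)) *\<^sub>R x ^ k)"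
    proof (rule sum.cong)
      fix i assume "i \<in> {..k}"
      hence "x ^ i * x ^ (k - i) = x ^ k" by (simp add: power_add[symmetric])
      thus "(bc i *\<^sub>R x ^ i) * (bc (k - i) *\<^sub>R x ^ (k - i)) = (bc i * bc (k - i)) *\<^sub>R x ^ k" by simp
    qed simp
    also have "\<dots> = (\<Sum>i\<le>k. bc i * bc (k - i)) *\<^sub>R x ^ k" by (simp add: scaleR_sum_left)
    also have "\<dots> = (if k = 0 then 1 else 0) + (if k = 1 then - x else 0)" by (simp add: bc_cauchy)
    finally show "(\<Sum>i\<le>k. (bc i *\<^sub>R x ^ i) * (bc (k - i) *\<^sub>R x ^ (k - i))) = (if k = 0 then 1 else 0) + (if k = 1 then - x else 0)" .
  qed
  also have "\<dots> = 1 + - x"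
  proof (rule sums_unique[symmetric], rule sums_add)
    show "(\<lambda>k. if k = 0 then 1 else (0::'a)) sums 1" using sums_single[of 0 "\<lambda>_. 1::'a"] by simp
    show "(\<lambda>k. if k = 1 then - x else 0) sums (- x)" using sums_single[of 1 "\<lambda>_. - x"] by simp
  qed
  finally show ?thesis by simp
qed

lemma cstar_power: "cstar (x ^ n) = (cstar (x::'a::cstar_algebra)) ^ n"
  by (induction n) (simp_all add: cstar_mult power_commutes)

lemma bsq_sa:
  fixes x :: "'a::cstar_algebra"
  assumes "norm x \<le> 1" "cstar x = x"
  shows "cstar (bsq x) = bsq x"
  unfolding bsq_def using assms by (simp add: cstar_suminf bsq_summable cstar_power)

lemma bsq_comm:
  fixes x y :: "'a::cstar_algebra"
  assumes "norm x \<le> 1" "y * x = x * y"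
  shows "y * bsq x = bsq x * y"
  unfolding bsq_def
proof (rule suminf_commute[OF bsq_summable[OF assms(1)]])
  fix n
  show "y * (bc n *\<^sub>R x ^ n) = bc n *\<^sub>R x ^ n * y"
    using power_commuting_commutes[of x y n] assms(2) by simp
qed

lemma bsq_one_minus:
  fixes x :: "'a::cstar_algebra"
  assumes "norm x \<le> 1"
  shows "norm (1 - bsq x) \<le> 1"
proof -
  let ?f = "\<lambda>k. bc k *\<^sub>R x ^ k"
  have sf: "summable ?f" by (rule bsq_summable[OF assms])
  have sn: "summable (\<lambda>k. norm (?f (Suc k)))"
    using bsq_summable_norm[OF assms] by (subst summable_Suc_iff)
  have "(\<Sum>k. ?f (Suc k)) = bsq x - 1" unfolding bsq_def using suminf_split_head[OF sf] by simp
  hence "norm (1 - bsq x) = norm (\<Sum>k. ?f (Suc k))" by (metis norm_minus_commute)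
  also have "\<dots> \<le> (\<Sum>k. norm (?f (Suc k)))" by (rule summable_norm[OF sn])
  also have "\<dots> \<le> (\<Sum>k. \<bar>bc (Suc k)\<bar>)"
  proof (rule suminf_le[OF _ sn bc_tail_summable])
    fix n
    have "norm (x ^ Suc n) \<le> norm x ^ Suc n" by (rule norm_power_ineq)
    also have "\<dots> \<le> 1" using assms by (intro power_le_one) auto
    finally have "norm (x ^ Suc n) \<le> 1" .
    hence "\<bar>bc (Suc n)\<bar> * norm (x ^ Suc n) \<le> \<bar>bc (Suc n)\<bar>" by (simp add: mult_left_le)
    thus "norm (?f (Suc n)) \<le> \<bar>bc (Suc n)\<bar>" by simp
  qed
  also have "\<dots> \<le> 1" by (rule bc_tail_le)
  finally show ?thesis .
qed

definition invt :: "'a::cstar_algebra \<Rightarrow> 'a \<Rightarrow> bool" where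
  "invt a b \<longleftrightarrow> a * b = 1 \<and> b * a = 1"

lemma neumann:
  fixes y :: "'a::cstar_algebra"
  assumes "norm y < 1"
  shows "\<exists>z. invt (1 - y) z"
proof -
  have sn: "summable (\<lambda>n. norm (y ^ n))"
    by (rule summable_comparison_test[OF _ summable_geometric[of "norm y"]])
       (use assms norm_power_ineq in auto)
  have s: "summable (\<lambda>n. y ^ n)" by (rule summable_norm_cancel[OF sn])
  define z where "z = (\<Sum>n. y ^ n)"
  have h: "(\<Sum>n. y ^ Suc n) = z - 1" unfolding z_def using suminf_split_head[OF s] by simp
  have "(1 - y) * z = z - y * z" by (simp add: algebra_simps)
  also have "y * z = (\<Sum>n. y ^ Suc n)" unfolding z_def using suminf_mult[OF s, of y] by simp
  finally have 1: "(1 - y) * z = 1" using h by simp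
  have "z * (1 - y) = z - z * y" by (simp add: algebra_simps)
  also have "z * y = (\<Sum>n. y ^ Suc n)" unfolding z_def using suminf_mult2[OF s, of y]
    by (simp add: power_commutes)
  finally have 2: "z * (1 - y) = 1" using h by simp
  show ?thesis using 1 2 unfolding invt_def by blast
qed

lemma invt_comm:
  fixes a b y :: "'a::cstar_algebra"
  assumes "invt a b" "y * a = a * y"
  shows "y * b = b * y"
proof -
  have "y * b = b * a * y * b" using assms(1) unfolding invt_def by simp
  also have "\<dots> = b * y * a * b" using assms(2) by (simp add: mult.assoc)
  also have "\<dots> = b * y" using assms(1) unfolding invt_def by (simp add: mult.assoc)
  finally show ?thesis .
qed

lemma invt_unique: "invt a b \<Longrightarrow> invt a c \<Longrightarrow> b = (c::'a::cstar_algebra)"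
  unfolding invt_def by (metis mult.assoc mult_1_left mult_1_right)

lemma invt_sa: "invt a b \<Longrightarrow> cstar a = a \<Longrightarrow> cstar b = (b::'a::cstar_algebra)"
  unfolding invt_def by (metis cstar_mult cstar_one invt_def invt_unique)

lemma C0:
  fixes f g :: "'a::cstar_algebra"
  assumes f: "cstar f = f" and g: "cstar g = g" and fg: "f * g = g * f"
    and s: "f * f + g * g = s *\<^sub>R 1"
  shows "norm f ^ 2 \<le> \<bar>s\<bar>" and "norm (f * g) \<le> \<bar>s\<bar> / 2"
proof -
  define w where "w = f + ci g"
  have cw: "cstar w = f - ci g" unfolding w_def using f g by (simp add: cstar_add)
  have "cstar w * w = f * f + g * g"
    unfolding cw unfolding w_def by (simp add: algebra_simps fg)
  hence nw: "norm w ^ 2 = \<bar>s\<bar>" using s by (metis cstar_identity norm_scaleR norm_one mult_1_right)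
  have "2 *\<^sub>R f = w + cstar w" unfolding cw unfolding w_def by (simp add: scaleR_2)
  hence "2 * norm f \<le> norm w + norm (cstar w)" by (metis norm_scaleR norm_triangle_ineq abs_numeral)
  hence "norm f \<le> norm w" by simp
  hence "norm f ^ 2 \<le> norm w ^ 2" by (simp add: power_mono)
  thus "norm f ^ 2 \<le> \<bar>s\<bar>" using nw by simp
  have "w * w - cstar w * cstar w = 4 *\<^sub>R ci (f * g)"
    unfolding cw unfolding w_def by (simp add: algebra_simps fg scaleR_2[symmetric] flip: scaleR_add_left)
  hence "4 * norm (f * g) = norm (w * w - cstar w * cstar w)" by (metis norm_ci norm_scaleR abs_numeral)
  also have "\<dots> \<le> norm (w * w) + norm (cstar w * cstar w)" by (rule norm_triangle_ineq4)
  also have "\<dots> \<le> norm w * norm w + norm (cstar w) * norm (cstar w)"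
    by (intro add_mono norm_mult_ineq)
  also have "\<dots> = 2 * \<bar>s\<bar>" using nw by (simp add: power2_eq_square)
  finally show "norm (f * g) \<le> \<bar>s\<bar> / 2" by simp
qed

definition np :: "'a::cstar_algebra \<Rightarrow> bool" where
  "np c \<longleftrightarrow> (\<exists>g. cstar g = g \<and> c = g * g)"

lemma np_sa: "np c \<Longrightarrow> cstar c = (c::'a::cstar_algebra)"
  unfolding np_def by (auto simp: cstar_mult)

lemma np_sq: "cstar g = g \<Longrightarrow> np (g * (g::'a::cstar_algebra))"
  unfolding np_def by blast

lemma np_zero[simp]: "np (0::'a::cstar_algebra)"
  using np_sq[of "0::'a"] by simp

lemma np_one[simp]: "np (1::'a::cstar_algebra)"
  using np_sq[of "1::'a"] by simp

lemma np_scale: "np c \<Longrightarrow> 0 \<le> a \<Longrightarrow> np (a *\<^sub>R (c::'a::cstar_algebra))"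
proof -
  assume "np c" "0 \<le> a"
  then obtain g where g: "cstar g = g" "c = g * g" unfolding np_def by blast
  have "a *\<^sub>R c = (sqrt a *\<^sub>R g) * (sqrt a *\<^sub>R g)" using g \<open>0 \<le> a\<close>
    by (simp add: real_sqrt_mult[symmetric])
  moreover have "cstar (sqrt a *\<^sub>R g) = sqrt a *\<^sub>R g" using g by simp
  ultimately show ?thesis unfolding np_def by blast
qed

lemma sa_le1:
  fixes h :: "'a::cstar_algebra"
  assumes h: "cstar h = h" and n: "norm h \<le> 1"
  shows "norm (1 - h * h) \<le> 1"
proof -
  define x where "x = h * h"
  have xs: "cstar x = x" unfolding x_def using h by (simp add: cstar_mult)
  have "norm x = norm h ^ 2" unfolding x_def using sa_sq_norm[OF h] .
  also have "\<dots> \<le> 1" using n by (simp add: power_le_one)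
  finally have nx: "norm x \<le> 1" .
  define y where "y = bsq x"
  have ys: "cstar y = y" unfolding y_def by (rule bsq_sa[OF nx xs])
  have yy: "y * y = 1 - x" unfolding y_def by (rule bsq_sq[OF nx])
  have hy: "h * y = y * h" unfolding y_def by (rule bsq_comm[OF nx]) (simp add: x_def mult.assoc)
  have "y * y + h * h = 1 *\<^sub>R 1" using yy by (simp add: x_def)
  from C0(1)[OF ys h hy[symmetric] this] have "norm y ^ 2 \<le> 1" by simp
  moreover have "norm (1 - h * h) = norm y ^ 2" using yy sa_sq_norm[OF ys] by (simp add: x_def)
  ultimately show ?thesis by simp
qed

lemma np_bound:
  fixes c :: "'a::cstar_algebra"
  assumes "np c" "norm c \<le> t"
  shows "norm (t *\<^sub>R 1 - c) \<le> t"
proof (cases "t = 0")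
  case True
  hence "c = 0" using assms(2) by simp
  thus ?thesis using True by simp
next
  case False
  hence tp: "t > 0" using assms(2) norm_ge_zero[of c] by linarith
  obtain g where g: "cstar g = g" "c = g * g" using assms(1) unfolding np_def by blast
  define h where "h = (1 / sqrt t) *\<^sub>R g"
  have hs: "cstar h = h" unfolding h_def using g by simp
  have hh: "h * h = (1 / t) *\<^sub>R c" unfolding h_def using g tp
    by (simp add: real_sqrt_mult[symmetric])
  have "norm h ^ 2 = norm (h * h)" using sa_sq_norm[OF hs] by simp
  also have "\<dots> = norm c / t" using hh tp by simp
  also have "\<dots> \<le> 1" using assms(2) tp by simp
  finally have "norm h ^ 2 \<le> 1 ^ 2" by simp
  hence "norm h \<le> 1" by (rule power2_le_imp_le) simp
  hence "norm (1 - h * h) \<le> 1" by (rule sa_le1[OF hs])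
  moreover have "t *\<^sub>R 1 - c = t *\<^sub>R (1 - h * h)" using hh tp by (simp add: algebra_simps)
  ultimately show ?thesis using tp by (simp add: mult_left_le)
qed

lemma np_crit:
  fixes c :: "'a::cstar_algebra"
  assumes cs: "cstar c = c" and tp: "0 < t" and n: "norm (t *\<^sub>R 1 - c) \<le> t"
  shows "np c"
proof -
  define y where "y = (1 / t) *\<^sub>R c"
  have e: "1 - y = (1 / t) *\<^sub>R (t *\<^sub>R 1 - c)" unfolding y_def using tp by (simp add: algebra_simps)
  have ny: "norm (1 - y) \<le> 1" unfolding e using n tp by (simp add: divide_le_eq)
  have "cstar (1 - y) = 1 - y" unfolding y_def using cs by simp
  hence "cstar (bsq (1 - y)) = bsq (1 - y)" by (rule bsq_sa[OF ny])
  moreover have "bsq (1 - y) * bsq (1 - y) = y" using bsq_sq[OF ny] by simp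
  ultimately have "np y" unfolding np_def by (intro exI[of _ "bsq (1 - y)"]) simp
  hence "np (t *\<^sub>R y)" using tp by (intro np_scale) auto
  thus ?thesis unfolding y_def using tp by simp
qed

definition csqrt :: "'a::cstar_algebra \<Rightarrow> 'a" where
  "csqrt c = (if c = 0 then 0 else sqrt (norm c) *\<^sub>R bsq (1 - (1 / norm c) *\<^sub>R c))"

lemma csqrt_all:
  fixes c :: "'a::cstar_algebra"
  assumes "np c"
  shows "cstar (csqrt c) = csqrt c \<and> csqrt c * csqrt c = c \<and> np (csqrt c) \<and>
         (\<forall>y. y * c = c * y \<longrightarrow> y * csqrt c = csqrt c * y)"
proof (cases "c = 0")
  case True thus ?thesis by (simp add: csqrt_def)
next
  case False
  define t where "t = norm c"
  have tp: "t > 0" unfolding t_def using False by simp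
  have cs: "cstar c = c" by (rule np_sa[OF assms])
  define x where "x = 1 - (1 / t) *\<^sub>R c"
  have e: "x = (1 / t) *\<^sub>R (t *\<^sub>R 1 - c)" unfolding x_def using tp by (simp add: algebra_simps)
  have "norm (t *\<^sub>R 1 - c) \<le> t" using np_bound[OF assms, of t] by (simp add: t_def)
  hence nx: "norm x \<le> 1" unfolding e using tp by (simp add: divide_le_eq)
  have xs: "cstar x = x" unfolding x_def using cs by simp
  define B where "B = bsq x"
  have cd: "csqrt c = sqrt t *\<^sub>R B" unfolding csqrt_def B_def x_def t_def using False by simp
  have Bs: "cstar B = B" unfolding B_def by (rule bsq_sa[OF nx xs])
  have BB: "B * B = 1 - x" unfolding B_def by (rule bsq_sq[OF nx])
  have npB: "np B" by (rule np_crit[OF Bs, of 1]) (use bsq_one_minus[OF nx] in \<open>simp_all add: B_def\<close>)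
  have 1: "cstar (csqrt c) = csqrt c" unfolding cd using Bs by simp
  have 2: "csqrt c * csqrt c = c" unfolding cd using BB tp by (simp add: x_def real_sqrt_mult[symmetric])
  have 3: "np (csqrt c)" unfolding cd by (rule np_scale[OF npB]) (use tp in simp)
  have 4: "y * csqrt c = csqrt c * y" if "y * c = c * y" for y
  proof -
    have "y * x = x * y" unfolding x_def using that by (simp add: algebra_simps)
    hence "y * B = B * y" unfolding B_def by (rule bsq_comm[OF nx])
    thus ?thesis unfolding cd by simp
  qed
  show ?thesis using 1 2 3 4 by blast
qed

lemma csqrt_sa: "np c \<Longrightarrow> cstar (csqrt c) = csqrt (c::'a::cstar_algebra)"
  using csqrt_all by blast
lemma csqrt_sq: "np c \<Longrightarrow> csqrt c * csqrt c = (c::'a::cstar_algebra)"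
  using csqrt_all by blast
lemma csqrt_np: "np c \<Longrightarrow> np (csqrt (c::'a::cstar_algebra))"
  using csqrt_all by blast
lemma csqrt_comm: "np c \<Longrightarrow> y * c = c * y \<Longrightarrow> y * csqrt c = csqrt c * (y::'a::cstar_algebra)"
  using csqrt_all by blast

lemma np_add:
  fixes a b :: "'a::cstar_algebra"
  assumes a: "np a" and b: "np b"
  shows "np (a + b)"
proof (cases "norm a + norm b = 0")
  case True
  hence "a = 0" "b = 0" by (auto simp: add_nonneg_eq_0_iff)
  thus ?thesis by simp
next
  case False
  define t where "t = norm a + norm b"
  have tp: "t > 0" unfolding t_def using False by (simp add: add_pos_nonneg order_le_neq_trans[OF _ False[symmetric]]) 
  have "t *\<^sub>R 1 - (a + b) = (norm a *\<^sub>R 1 - a) + (norm b *\<^sub>R 1 - b)" unfolding t_def by (simp add: algebra_simps)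
  hence "norm (t *\<^sub>R 1 - (a + b)) \<le> norm (norm a *\<^sub>R 1 - a) + norm (norm b *\<^sub>R 1 - b)"
    by (simp only: norm_triangle_ineq)
  also have "\<dots> \<le> t" unfolding t_def by (intro add_mono np_bound[OF a] np_bound[OF b]) auto
  finally show ?thesis using np_sa[OF a] np_sa[OF b] tp by (intro np_crit[of _ t]) (auto simp: cstar_add)
qed

lemma np_antisym:
  fixes c :: "'a::cstar_algebra"
  assumes a: "np c" and b: "np (- c)"
  shows "c = 0"
proof -
  define f where "f = csqrt c"
  define g where "g = csqrt (- c)"
  have gc: "g * c = c * g" unfolding g_def
  proof -
    have "c * (- c) = (- c) * c" by simp
    from csqrt_comm[OF b this] show "csqrt (- c) * c = c * csqrt (- c)" by simp
  qed
  have fg: "f * g = g * f" unfolding f_def using csqrt_comm[OF a gc] by simp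
  have "f * f + g * g = 0 *\<^sub>R 1" unfolding f_def g_def using csqrt_sq[OF a] csqrt_sq[OF b] by simp
  from C0(1)[OF csqrt_sa[OF a] csqrt_sa[OF b], folded f_def g_def, OF fg this]
  have "f = 0" by simp
  thus ?thesis using csqrt_sq[OF a] unfolding f_def by simp
qed

lemma np_mult:
  fixes a b :: "'a::cstar_algebra"
  assumes a: "np a" and b: "np b" and ab: "a * b = b * a"
  shows "np (a * b)"
proof -
  define f where "f = csqrt a"
  define g where "g = csqrt b"
  have fb: "f * b = b * f" unfolding f_def using csqrt_comm[OF a ab[symmetric]] by simp
  have fg: "f * g = g * f" unfolding g_def using csqrt_comm[OF b fb] by simp
  have "a * b = (f * g) * (f * g)" 
  proof -
    have "(f * g) * (f * g) = f * (g * f) * g" by (simp add: mult.assoc)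
    also have "\<dots> = f * (f * g) * g" using fg by simp
    also have "\<dots> = (f * f) * (g * g)" by (simp add: mult.assoc)
    finally show ?thesis unfolding f_def g_def using csqrt_sq[OF a] csqrt_sq[OF b] by simp
  qed
  moreover have "cstar (f * g) = f * g" unfolding f_def g_def
    using csqrt_sa[OF a] csqrt_sa[OF b] fg by (simp add: cstar_mult f_def g_def)
  ultimately show ?thesis unfolding np_def by blast
qed

lemma np_inv:
  fixes d b :: "'a::cstar_algebra"
  assumes d: "np d" and i: "invt d b"
  shows "np b"
proof -
  define r where "r = csqrt d"
  have bs: "cstar b = b" by (rule invt_sa[OF i np_sa[OF d]])
  have "r * (r * r) = (r * r) * r" by (simp add: mult.assoc)
  hence rd: "r * d = d * r" unfolding r_def using csqrt_sq[OF d] by simp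
  have rb: "r * b = b * r" by (rule invt_comm[OF i rd])
  have "(r * b) * (r * b) = r * (b * r) * b" by (simp add: mult.assoc)
  also have "\<dots> = r * (r * b) * b" using rb by simp
  also have "\<dots> = (r * r) * (b * b)" by (simp add: mult.assoc)
  also have "\<dots> = (d * b) * b" unfolding r_def using csqrt_sq[OF d] by (simp add: mult.assoc)
  also have "\<dots> = b" using i unfolding invt_def by simp
  finally have 1: "b = (r * b) * (r * b)" ..
  have "cstar (r * b) = r * b" using bs csqrt_sa[OF d] rb unfolding r_def by (simp add: cstar_mult)
  thus ?thesis using 1 unfolding np_def by blast
qed

lemma np_plus_invt:
  fixes m :: "'a::cstar_algebra"
  assumes m: "np m" and tp: "0 < t"
  shows "\<exists>z. invt (t *\<^sub>R 1 + m) z"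
proof -
  define s where "s = norm m"
  define y where "y = (1 / (t + s)) *\<^sub>R (s *\<^sub>R 1 - m)"
  have sp: "s \<ge> 0" unfolding s_def by simp
  have "norm y = norm (s *\<^sub>R 1 - m) / (t + s)" unfolding y_def using sp tp by simp
  also have "\<dots> \<le> s / (t + s)" using np_bound[OF m, of s] sp tp by (simp add: s_def divide_right_mono)
  also have "\<dots> < 1" using sp tp by simp
  finally obtain z where z: "invt (1 - y) z" using neumann by blast
  have ty: "(t + s) *\<^sub>R y = s *\<^sub>R 1 - m" unfolding y_def using sp tp by simp
  have e: "t *\<^sub>R 1 + m = (t + s) *\<^sub>R (1 - y)" unfolding scaleR_right_diff_distrib ty by (simp add: algebra_simps)
  have "invt (t *\<^sub>R 1 + m) ((1 / (t + s)) *\<^sub>R z)" using z sp tp unfolding e invt_def by simp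
  thus ?thesis by blast
qed

lemma np_sum_bound:
  fixes u v :: "'a::cstar_algebra"
  assumes u: "np u" and v: "np v" and s: "u + v = s *\<^sub>R 1"
  shows "norm u \<le> \<bar>s\<bar>"
proof -
  have ve: "v = s *\<^sub>R 1 - u" using s by (simp add: algebra_simps)
  have vu: "v * u = u * v" unfolding ve by (simp add: algebra_simps)
  define f where "f = csqrt u"
  define g where "g = csqrt v"
  have fv: "f * v = v * f" unfolding f_def using csqrt_comm[OF u vu] by simp
  have fg: "f * g = g * f" unfolding g_def using csqrt_comm[OF v fv] by simp
  have "f * f + g * g = s *\<^sub>R 1" unfolding f_def g_def using csqrt_sq[OF u] csqrt_sq[OF v] s by simp
  from C0(1)[OF csqrt_sa[OF u] csqrt_sa[OF v], folded f_def g_def, OF fg this]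
  have "norm f ^ 2 \<le> \<bar>s\<bar>" .
  moreover have "norm u = norm f ^ 2" using sa_sq_norm[OF csqrt_sa[OF u]] csqrt_sq[OF u] unfolding f_def by simp
  ultimately show ?thesis by simp
qed

lemma np_approx:
  fixes u :: "'a::cstar_algebra"
  assumes us: "cstar u = u" and ap: "\<And>d. d > 0 \<Longrightarrow> \<exists>a. np a \<and> norm (u - a) < d"
  shows "np u"
proof (cases "u = 0")
  case True thus ?thesis by simp
next
  case False
  define t where "t = norm u"
  have tp: "t > 0" unfolding t_def using False by simp
  have key: "norm (t *\<^sub>R 1 - u) \<le> t + 3 * d" if dp: "d > 0" for d
  proof -
    obtain a where a: "np a" "norm (u - a) < d" using ap[OF dp] by blast
    have eq: "t *\<^sub>R 1 - u = (norm a *\<^sub>R 1 - a) + ((t - norm a) *\<^sub>R 1) + (a - u)" by (simp add: algebra_simps)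
    have "norm (t *\<^sub>R 1 - u) \<le> norm (norm a *\<^sub>R 1 - a) + norm ((t - norm a) *\<^sub>R (1::'a)) + norm (a - u)"
      by (subst eq) (rule order_trans[OF norm_triangle_ineq add_right_mono[OF norm_triangle_ineq]])
    also have "norm (norm a *\<^sub>R 1 - a) \<le> norm a" by (rule np_bound[OF a(1)]) simp
    also have "norm ((t - norm a) *\<^sub>R (1::'a)) = \<bar>t - norm a\<bar>" by simp
    also have "norm (a - u) = norm (u - a)" by (rule norm_minus_commute)
    finally have 1: "norm (t *\<^sub>R 1 - u) \<le> norm a + \<bar>t - norm a\<bar> + norm (u - a)" by simp
    have "\<bar>t - norm a\<bar> \<le> norm (u - a)" unfolding t_def by (rule norm_triangle_ineq3)
    moreover have "norm a \<le> t + norm (u - a)" unfolding t_def using norm_triangle_ineq4[of u "u - a"] by simp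
    ultimately show ?thesis using 1 a(2) by linarith
  qed
  have "norm (t *\<^sub>R 1 - u) \<le> t"
  proof (rule field_le_epsilon)
    fix e :: real assume "e > 0"
    thus "norm (t *\<^sub>R 1 - u) \<le> t + e" using key[of "e/3"] by simp
  qed
  thus ?thesis by (rule np_crit[OF us tp])
qed

lemma np_split:
  fixes u w :: "'a::cstar_algebra"
  assumes us: "cstar u = u" and w: "np w" and uw: "u * w = w * u" and uu: "u * u = u * w"
  shows "np u"
proof (rule np_approx[OF us])
  fix d :: real assume dp: "d > 0"
  define e where "e = 2 * d^2 / (norm u + 1)"
  have "norm u + 1 > 0" by (simp add: add_nonneg_pos)
  hence ep: "e > 0" unfolding e_def using dp by simp
  have npe: "np (e *\<^sub>R 1 + w)" using ep by (intro np_add np_scale w) auto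
  obtain k where k: "invt (e *\<^sub>R 1 + w) k" using np_plus_invt[OF w ep] by blast
  have k1: "(e *\<^sub>R 1 + w) * k = 1" "k * (e *\<^sub>R 1 + w) = 1" using k unfolding invt_def by auto
  have npk: "np k" by (rule np_inv[OF npe k])
  have ks: "cstar k = k" by (rule np_sa[OF npk])
  have uk: "u * k = k * u" by (rule invt_comm[OF k]) (simp add: algebra_simps uw)
  have wk: "w * k = k * w" by (rule invt_comm[OF k]) (simp add: algebra_simps)
  define a where "a = (u * u) * k"
  have npa: "np a" unfolding a_def
  proof (rule np_mult[OF np_sq[OF us] npk])
    have "u * u * k = u * (u * k)" by (simp only: mult.assoc)
    also have "\<dots> = u * (k * u)" by (simp only: uk)
    also have "\<dots> = (u * k) * u" by (simp only: mult.assoc)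
    also have "\<dots> = (k * u) * u" by (simp only: uk)
    also have "\<dots> = k * (u * u)" by (simp only: mult.assoc)
    finally show "u * u * k = k * (u * u)" .
  qed
  have ua: "u - a = e *\<^sub>R (u * k)"
  proof -
    have "u = u * ((e *\<^sub>R 1 + w) * k)" using k1 by simp
    also have "\<dots> = (u * (e *\<^sub>R 1 + w)) * k" by (simp only: mult.assoc)
    also have "\<dots> = (e *\<^sub>R u + u * u) * k" using uu by (simp add: distrib_left)
    finally show ?thesis unfolding a_def by (simp add: algebra_simps)
  qed
  define z where "z = e *\<^sub>R k"
  have npz: "np z" unfolding z_def using ep by (intro np_scale npk) auto
  have z1: "1 - z = w * k" unfolding z_def using k1(1) by (simp add: algebra_simps)
  have np1z: "np (1 - z)" unfolding z1 by (rule np_mult[OF w npk wk])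
  have zb: "norm (z * (1 - z)) \<le> 1/4"
  proof -
    define f where "f = csqrt z"
    define g where "g = csqrt (1 - z)"
    have c1: "z * (1 - z) = (1 - z) * z" by (simp add: algebra_simps)
    have fz: "(1 - z) * f = f * (1 - z)" unfolding f_def by (rule csqrt_comm[OF npz]) (simp add: algebra_simps)
    have fg: "f * g = g * f" unfolding g_def by (rule csqrt_comm[OF np1z fz[symmetric]])
    have "f * f + g * g = 1 *\<^sub>R 1" unfolding f_def g_def using csqrt_sq[OF npz] csqrt_sq[OF np1z] by simp
    from C0(2)[OF csqrt_sa[OF npz] csqrt_sa[OF np1z], folded f_def g_def, OF fg this]
    have nfg: "norm (f * g) \<le> 1/2" by simp
    have "z * (1 - z) = (f * g) * (f * g)"
    proof -
      have "(f * g) * (f * g) = f * (g * f) * g" by (simp add: mult.assoc)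
      also have "\<dots> = f * (f * g) * g" using fg by simp
      also have "\<dots> = (f * f) * (g * g)" by (simp add: mult.assoc)
      finally show ?thesis unfolding f_def g_def using csqrt_sq[OF npz] csqrt_sq[OF np1z] by simp
    qed
    hence "norm (z * (1 - z)) \<le> norm (f * g) * norm (f * g)" by (simp add: norm_mult_ineq)
    also have "\<dots> \<le> (1/2) * (1/2)" using nfg by (intro mult_mono) auto
    finally show ?thesis by simp
  qed
  have uks: "cstar (u * k) = u * k" using us ks uk by (simp add: cstar_mult)
  have "norm (u - a) ^ 2 = e^2 * norm ((u * k) * (u * k))"
    unfolding ua using sa_sq_norm[OF uks] by (simp add: power_mult_distrib)
  also have "(u * k) * (u * k) = u * (k * u) * k" by (simp add: mult.assoc)
  also have "\<dots> = u * (u * k) * k" using uk by simp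
  also have "\<dots> = (u * u) * (k * k)" by (simp add: mult.assoc)
  also have "\<dots> = u * ((w * k) * k)" using uu by (simp add: mult.assoc)
  also have "e^2 * norm (u * ((w * k) * k)) = e * norm (u * (z * (1 - z)))"
  proof -
    have "z * (1 - z) = e *\<^sub>R ((w * k) * k)" unfolding z1 unfolding z_def using wk by (simp add: mult.assoc)
    thus ?thesis using ep by (simp add: power2_eq_square)
  qed
  also have "e * norm (u * (z * (1 - z))) \<le> e * (norm u * (1/4))"
  proof -
    have "norm (u * (z * (1 - z))) \<le> norm u * norm (z * (1 - z))" by (rule norm_mult_ineq)
    also have "\<dots> \<le> norm u * (1/4)" using zb by (intro mult_left_mono) auto
    finally show ?thesis using ep by (intro mult_left_mono) auto
  qed
  also have "\<dots> < d ^ 2"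
  proof -
    have nu: "norm u \<ge> 0" by simp
    have pos: "0 < 2 * (norm u + 1)" by (rule mult_pos_pos) (simp_all add: add_nonneg_pos)
    have "norm u < 1 * (2 * (norm u + 1))" using nu by (smt (verit))
    hence q: "norm u / (2 * (norm u + 1)) < 1" by (simp only: pos_divide_less_eq[OF pos])
    have "e * (norm u * (1/4)) = d^2 * (norm u / (2 * (norm u + 1)))" unfolding e_def using nu by (simp add: field_simps)
    also have "\<dots> < d^2 * 1" using dp q by (intro mult_strict_left_mono) auto
    finally show ?thesis by simp
  qed
  finally have "norm (u - a) ^ 2 < d ^ 2" .
  hence "norm (u - a) < d" using dp by (simp add: power_less_imp_less_base)
  thus "\<exists>a. np a \<and> norm (u - a) < d" using npa by blast
qed

lemma np_lt1:
  fixes e b :: "'a::cstar_algebra"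
  assumes e: "np e" and n1: "norm e \<le> 1" and i: "invt (1 - e) b"
  shows "norm e < 1"
proof -
  define d where "d = 1 - e"
  have es: "cstar e = e" by (rule np_sa[OF e])
  have npd: "np d" unfolding d_def by (rule np_crit[of _ 1]) (use es n1 in simp_all)
  have i': "invt d b" using i unfolding d_def .
  have npb: "np b" by (rule np_inv[OF npd i'])
  have bs: "cstar b = b" by (rule np_sa[OF npb])
  define M where "M = norm b + 1"
  have Mp: "M > 0" unfolding M_def by (simp add: add_nonneg_pos)
  have np2: "np (1 - (1 / M) *\<^sub>R b)"
  proof (rule np_crit[of _ 1])
    show "cstar (1 - (1 / M) *\<^sub>R b) = 1 - (1 / M) *\<^sub>R b" using bs by simp
    have "norm b / M \<le> 1" using Mp unfolding M_def by simp
    thus "norm (1 *\<^sub>R 1 - (1 - (1 / M) *\<^sub>R b)) \<le> 1" using Mp by simp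
  qed simp
  have db: "d * b = b * d" using i' unfolding invt_def by simp
  have "d * (1 - (1 / M) *\<^sub>R b) = d - (1 / M) *\<^sub>R 1" using i' unfolding invt_def by (simp add: algebra_simps)
  moreover have "np (d * (1 - (1 / M) *\<^sub>R b))"
    by (rule np_mult[OF npd np2]) (simp add: algebra_simps db)
  ultimately have npv: "np (d - (1 / M) *\<^sub>R 1)" by simp
  have "e + (d - (1 / M) *\<^sub>R 1) = (1 - 1 / M) *\<^sub>R 1" unfolding d_def by (simp add: algebra_simps)
  from np_sum_bound[OF e npv this] have "norm e \<le> \<bar>1 - 1 / M\<bar>" .
  moreover have "1 / M \<le> 1" using Mp unfolding M_def by simp
  moreover have "0 < 1 / M" using Mp by simp
  ultimately show ?thesis by linarith
qed

lemma np_KK: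
  fixes z :: "'a::cstar_algebra"
  assumes p: "np (z * cstar z)" and m: "np (- (cstar z * z))"
  shows "z = 0"
proof (rule ccontr)
  assume nz: "z \<noteq> 0"
  define t where "t = norm z ^ 2"
  have tp: "t > 0" unfolding t_def using nz by simp
  have nt1: "norm (cstar z * z) = t" unfolding t_def by (rule cstar_identity)
  have nt2: "norm (z * cstar z) = t" unfolding t_def using cstar_identity[of "cstar z"] by (simp add: cstar_invol)
  obtain W where W: "invt (t *\<^sub>R 1 + - (cstar z * z)) W" using np_plus_invt[OF m tp] by blast
  have W1: "(t *\<^sub>R 1 - cstar z * z) * W = 1" and W2: "W * (t *\<^sub>R 1 - cstar z * z) = 1"
    using W unfolding invt_def by auto
  define e where "e = (1 / t) *\<^sub>R (z * cstar z)"
  have npe: "np e" unfolding e_def using tp by (intro np_scale p) auto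
  have ne: "norm e = 1" unfolding e_def using nt2 tp by simp
  define V where "V = 1 + z * W * cstar z"
  have "(1 - e) * V = 1"
  proof -
    have "(t *\<^sub>R 1 - z * cstar z) * V = t *\<^sub>R 1 - z * cstar z + z * ((t *\<^sub>R 1 - cstar z * z) * W) * cstar z"
      unfolding V_def by (simp add: algebra_simps mult.assoc)
    also have "\<dots> = t *\<^sub>R 1" using W1 by simp
    finally have "(t *\<^sub>R 1 - z * cstar z) * V = t *\<^sub>R 1" .
    moreover have "1 - e = (1 / t) *\<^sub>R (t *\<^sub>R 1 - z * cstar z)" unfolding e_def using tp by (simp add: algebra_simps)
    ultimately show ?thesis using tp by simp
  qed
  moreover have "V * (1 - e) = 1"
  proof -
    have "V * (t *\<^sub>R 1 - z * cstar z) = t *\<^sub>R 1 - z * cstar z + z * (W * (t *\<^sub>R 1 - cstar z * z)) * cstar z"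
      unfolding V_def by (simp add: algebra_simps mult.assoc)
    also have "\<dots> = t *\<^sub>R 1" using W2 by simp
    finally have "V * (t *\<^sub>R 1 - z * cstar z) = t *\<^sub>R 1" .
    moreover have "1 - e = (1 / t) *\<^sub>R (t *\<^sub>R 1 - z * cstar z)" unfolding e_def using tp by (simp add: algebra_simps)
    ultimately show ?thesis using tp by simp
  qed
  ultimately have "invt (1 - e) V" unfolding invt_def by blast
  from np_lt1[OF npe _ this] ne show False by simp
qed

lemma kaplansky:
  fixes x :: "'a::cstar_algebra"
  shows "np (cstar x * x)"
proof -
  define c where "c = cstar x * x"
  have cs: "cstar c = c" unfolding c_def by (simp add: cstar_mult cstar_invol)
  have npc2: "np (c * c)" by (rule np_sq[OF cs])
  define a where "a = csqrt (c * c)"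
  have as: "cstar a = a" unfolding a_def by (rule csqrt_sa[OF npc2])
  have aa: "a * a = c * c" unfolding a_def by (rule csqrt_sq[OF npc2])
  have npa: "np a" unfolding a_def by (rule csqrt_np[OF npc2])
  have ac: "c * a = a * c" unfolding a_def by (rule csqrt_comm[OF npc2]) (simp add: mult.assoc)
  define w where "w = 2 *\<^sub>R a"
  have npw: "np w" unfolding w_def by (rule np_scale[OF npa]) simp
  define u where "u = a - c"
  define v where "v = a + c"
  have uv: "u * v = 0" unfolding u_def v_def using aa ac by (simp add: algebra_simps)
  have vu: "v * u = 0" unfolding u_def v_def using aa ac by (simp add: algebra_simps)
  have wuv: "w = u + v" unfolding w_def u_def v_def by (simp add: scaleR_2)
  have npu: "np u"
  proof (rule np_split[OF _ npw])
    show "cstar u = u" unfolding u_def using as cs by simp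
    show "u * w = w * u" unfolding wuv u_def v_def using ac by (simp add: algebra_simps)
    show "u * u = u * w" unfolding wuv using uv by (simp add: algebra_simps)
  qed
  have npv: "np v"
  proof (rule np_split[OF _ npw])
    show "cstar v = v" unfolding v_def using as cs by (simp add: cstar_add)
    show "v * w = w * v" unfolding wuv u_def v_def using ac by (simp add: algebra_simps)
    show "v * v = v * w" unfolding wuv using vu by (simp add: algebra_simps)
  qed
  define n where "n = (1/2) *\<^sub>R u"
  define p where "p = (1/2) *\<^sub>R v"
  have npn: "np n" unfolding n_def by (rule np_scale[OF npu]) simp
  have npp: "np p" unfolding p_def by (rule np_scale[OF npv]) simp
  have ns: "cstar n = n" by (rule np_sa[OF npn])
  have cpn: "c = p - n" unfolding p_def n_def u_def v_def by (simp add: algebra_simps scaleR_2[symmetric] flip: scaleR_add_left)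
  have np0: "n * p = 0" unfolding n_def p_def using uv by simp
  have pn0: "p * n = 0" unfolding n_def p_def using vu by simp
  define z where "z = x * n"
  have zz: "cstar z * z = - (n * n * n)"
  proof -
    have "cstar z * z = n * c * n" unfolding z_def c_def using ns by (simp add: cstar_mult mult.assoc)
    also have "\<dots> = n * p * n - n * n * n" unfolding cpn by (simp add: algebra_simps)
    also have "\<dots> = - (n * n * n)" using np0 by simp
    finally show ?thesis .
  qed
  have npnnn: "np (n * n * n)"
  proof -
    have "np (n * (n * n))" by (rule np_mult[OF npn np_sq[OF ns]]) (simp add: mult.assoc)
    thus ?thesis by (simp add: mult.assoc)
  qed
  define h where "h = z + cstar z"
  define k where "k = ci (z - cstar z)"
  have hs: "cstar h = h" unfolding h_def by (simp add: cstar_add cstar_invol)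
  have ks: "cstar k = k" unfolding k_def by (simp add: cstar_invol)
  have hk: "h * h + k * k = 2 *\<^sub>R (z * cstar z + cstar z * z)"
    unfolding h_def k_def by (simp add: algebra_simps scaleR_2)
  have "(1/2) *\<^sub>R (h * h + k * k) = z * cstar z + cstar z * z" unfolding hk by simp
  also have "\<dots> = z * cstar z - n * n * n" using zz by simp
  finally have "z * cstar z = (1/2) *\<^sub>R (h * h + k * k) + n * n * n" by (simp add: algebra_simps)
  moreover have "np ((1/2) *\<^sub>R (h * h + k * k) + n * n * n)"
    by (intro np_add np_scale np_sq hs ks npnnn) simp
  ultimately have npzz: "np (z * cstar z)" by simp
  have "z = 0" by (rule np_KK[OF npzz]) (use zz npnnn in simp)
  hence "n * n * n = 0" using zz by simp
  hence "(n * n) * (n * n) = 0" by (simp add: mult.assoc[symmetric])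
  hence "n * n = 0" by (rule sa_zero_sq[rotated]) (simp add: cstar_mult ns)
  hence "n = 0" by (rule sa_zero_sq[OF ns])
  hence "c = p" using cpn by simp
  thus ?thesis using npp unfolding c_def by simp
qed

lemma np_unique_root:
  fixes p r :: "'a::cstar_algebra"
  assumes p: "np p" and r: "np r" and pr: "p * r = r * p" and sq: "p * p = r * r"
  shows "p = r"
proof -
  define w where "w = p - r"
  have ws: "cstar w = w" unfolding w_def using np_sa[OF p] np_sa[OF r] by simp
  define fp where "fp = csqrt p"
  define fr where "fr = csqrt r"
  have csp: "fp * fp = p" unfolding fp_def by (rule csqrt_sq[OF p])
  have csr: "fr * fr = r" unfolding fr_def by (rule csqrt_sq[OF r])
  have fpw: "fp * w = w * fp"
  proof -
    have "r * fp = fp * r" unfolding fp_def by (rule csqrt_comm[OF p pr[symmetric]])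
    moreover have "fp * p = p * fp" by (simp only: csp[symmetric] mult.assoc)
    ultimately show ?thesis unfolding w_def by (simp add: algebra_simps)
  qed
  have frw: "fr * w = w * fr"
  proof -
    have "p * fr = fr * p" unfolding fr_def by (rule csqrt_comm[OF r pr])
    moreover have "fr * r = r * fr" by (simp only: csr[symmetric] mult.assoc)
    ultimately show ?thesis unfolding w_def by (simp add: algebra_simps)
  qed
  have w0: "w * (p + r) = 0" unfolding w_def using sq pr by (simp add: algebra_simps)
  have wpr: "w * p = p * w" "w * r = r * w" unfolding w_def using pr by (simp_all add: algebra_simps)
  define X1 where "X1 = (w * fp) * (w * fp)"
  define X2 where "X2 = (w * fr) * (w * fr)"
  have wfps: "cstar (w * fp) = w * fp" using ws csqrt_sa[OF p] fpw unfolding fp_def by (simp add: cstar_mult)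
  have wfrs: "cstar (w * fr) = w * fr" using ws csqrt_sa[OF r] frw unfolding fr_def by (simp add: cstar_mult)
  have X1e: "X1 = w * w * p"
  proof -
    have "X1 = w * (fp * w) * fp" unfolding X1_def by (simp add: mult.assoc)
    also have "\<dots> = w * (w * fp) * fp" using fpw by simp
    also have "\<dots> = w * w * (fp * fp)" by (simp add: mult.assoc)
    finally show ?thesis unfolding fp_def using csqrt_sq[OF p] by simp
  qed
  have X2e: "X2 = w * w * r"
  proof -
    have "X2 = w * (fr * w) * fr" unfolding X2_def by (simp add: mult.assoc)
    also have "\<dots> = w * (w * fr) * fr" using frw by simp
    also have "\<dots> = w * w * (fr * fr)" by (simp add: mult.assoc)
    finally show ?thesis unfolding fr_def using csqrt_sq[OF r] by simp
  qed
  have "X1 + X2 = w * (w * (p + r))" unfolding X1e X2e by (simp add: algebra_simps)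
  hence "X2 + X1 = 0" using w0 by (simp add: add.commute)
  hence X12: "X2 = - X1" by (simp only: eq_neg_iff_add_eq_0)
  have npX1: "np X1" unfolding X1_def by (rule np_sq[OF wfps])
  have npX2: "np X2" unfolding X2_def by (rule np_sq[OF wfrs])
  have X10: "X1 = 0" by (rule np_antisym[OF npX1]) (use npX2 X12 in simp)
  hence "X2 = 0" using X12 by simp
  have "w * fp = 0" by (rule sa_zero_sq[OF wfps]) (use X10 X1_def in simp)
  hence wp: "w * p = 0" by (simp add: csp[symmetric] mult.assoc[symmetric])
  have "w * fr = 0" by (rule sa_zero_sq[OF wfrs]) (use \<open>X2 = 0\<close> X2_def in simp)
  hence wr: "w * r = 0" by (simp add: csr[symmetric] mult.assoc[symmetric])
  have "w * w = 0" using wp wr unfolding w_def by (simp add: algebra_simps)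
  hence "w = 0" by (rule sa_zero_sq[OF ws])
  thus ?thesis unfolding w_def by simp
qed

lemma positive_np: "cstar_positive p \<Longrightarrow> np (p::'a::cstar_algebra)"
  unfolding cstar_positive_def using kaplansky by blast

lemma positive_sqrt_unique:
  fixes p q :: "'a::cstar_algebra"
  assumes p: "cstar_positive p" and q: "cstar_positive q" and sq: "p * p = q * q"
  shows "p = q"
proof -
  have npp: "np p" by (rule positive_np[OF p])
  have npq: "np q" by (rule positive_np[OF q])
  have npa: "np (p * p)" by (rule np_sq[OF np_sa[OF npp]])
  define r where "r = csqrt (p * p)"
  have npr: "np r" unfolding r_def by (rule csqrt_np[OF npa])
  have rr: "r * r = p * p" unfolding r_def by (rule csqrt_sq[OF npa])
  have pr: "p * r = r * p" unfolding r_def by (rule csqrt_comm[OF npa]) (simp add: mult.assoc)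
  have qr: "q * r = r * q" unfolding r_def sq by (rule csqrt_comm[OF npa[unfolded sq]]) (simp add: mult.assoc)
  have "p = r" by (rule np_unique_root[OF npp npr pr rr[symmetric]])
  moreover have "q = r" by (rule np_unique_root[OF npq npr qr]) (use rr sq in simp)
  ultimately show ?thesis by simp
qed

lemma mp_unique:
  fixes T X Y :: "'a::cstar_algebra"
  assumes x1: "T * X * T = T" and x2: "X * T * X = X" and x3: "cstar (T * X) = T * X" and x4: "cstar (X * T) = X * T"
      and y1: "T * Y * T = T" and y2: "Y * T * Y = Y" and y3: "cstar (T * Y) = T * Y" and y4: "cstar (Y * T) = Y * T"
  shows "X = Y"
proof -
  have hx3: "T * X = cstar X * cstar T" using x3 by (simp add: cstar_mult)
  have hy3: "T * Y = cstar Y * cstar T" using y3 by (simp add: cstar_mult)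
  have hx4: "X * T = cstar T * cstar X" using x4 by (simp add: cstar_mult)
  have hy4: "Y * T = cstar T * cstar Y" using y4 by (simp add: cstar_mult)
  have tstar: "cstar T = cstar T * cstar Y * cstar T"
    using arg_cong[OF y1, of cstar] by (simp add: cstar_mult mult.assoc)
  have tstar2: "cstar T = cstar T * cstar X * cstar T"
    using arg_cong[OF x1, of cstar] by (simp add: cstar_mult mult.assoc)
  have "X = X * (T * X)" using x2 by (simp add: mult.assoc)
  also have "\<dots> = X * (cstar X * cstar T)" by (simp only: hx3)
  also have "\<dots> = X * (cstar X * (cstar T * cstar Y * cstar T))" by (simp only: tstar[symmetric])
  also have "\<dots> = X * (cstar X * cstar T) * (cstar Y * cstar T)" by (simp only: mult.assoc)
  also have "\<dots> = X * (T * X) * (T * Y)" by (simp only: hx3 hy3)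
  also have "\<dots> = (X * T * X) * T * Y" by (simp only: mult.assoc)
  also have "\<dots> = X * T * Y" by (simp only: x2)
  finally have 1: "X = X * T * Y" .
  have "Y = (Y * T) * Y" using y2 by (simp add: mult.assoc)
  also have "\<dots> = (cstar T * cstar Y) * Y" by (simp only: hy4)
  also have "\<dots> = ((cstar T * cstar X * cstar T) * cstar Y) * Y" by (simp only: tstar2[symmetric])
  also have "\<dots> = (cstar T * cstar X) * (cstar T * cstar Y) * Y" by (simp only: mult.assoc)
  also have "\<dots> = (X * T) * (Y * T) * Y" by (simp only: hx4 hy4)
  also have "\<dots> = X * T * (Y * T * Y)" by (simp only: mult.assoc)
  also have "\<dots> = X * T * Y" by (simp only: y2)
  finally have 2: "Y = X * T * Y" .
  show ?thesis using 1 2 by simp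
qed

lemma cabs_eq:
  fixes T s :: "'a::cstar_algebra"
  assumes "cstar_positive s" "s * s = cstar T * T"
  shows "cabs T = s"
  unfolding cabs_def
proof (rule the_equality)
  show "cstar_positive s \<and> s * s = cstar T * T" using assms by simp
  fix p assume "cstar_positive p \<and> p * p = cstar T * T"
  thus "p = s" using assms positive_sqrt_unique[of p s] by simp
qed

lemma mp_inv_eq:
  fixes T X :: "'a::cstar_algebra"
  assumes "T * X * T = T" "X * T * X = X" "cstar (T * X) = T * X" "cstar (X * T) = X * T"
  shows "mp_inv T = X"
  unfolding mp_inv_def
  by (rule the_equality) (use assms mp_unique in \<open>blast+\<close>)

lemma ainv_eq:
  fixes T X :: "'a::cstar_algebra"
  assumes "T * X = 1" "X * T = 1"
  shows "ainv T = X"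
  unfolding ainv_def
  by (rule the_equality) (use assms invt_unique[unfolded invt_def] in \<open>blast+\<close>)

lemma mult_assoc_rule: "a * b = c \<Longrightarrow> a * (b * z) = c * (z::'a::cstar_algebra)"
  by (simp add: mult.assoc[symmetric])

lemma mformula:
  fixes Q R Ri Ki :: "'a::cstar_algebra"
  assumes QQ: "Q * Q = Q"
    and Rs: "cstar R = R" and npR: "np R"
    and RR: "R * R = (Q + cstar Q - 1) * (Q + cstar Q - 1)"
    and RQ: "R * Q = Q * R" and RQs: "R * cstar Q = cstar Q * R"
    and RRi: "R * Ri = 1" and RiR: "Ri * R = 1"
    and RKi: "(1 + R) * Ki = 1" and KiR: "Ki * (1 + R) = 1"
  shows "matched_proj Q = (1/2) *\<^sub>R (1 + (Q + cstar Q - 1) * Ri)"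
proof -
  define Qs where "Qs = cstar Q"
  have QsQs: "Qs * Qs = Qs" unfolding Qs_def using arg_cong[OF QQ, of cstar] by (simp add: cstar_mult)
  have cQs: "cstar Qs = Q" unfolding Qs_def by (simp add: cstar_invol)
  have iR: "invt R Ri" unfolding invt_def using RRi RiR by simp
  have iK: "invt (1 + R) Ki" unfolding invt_def using RKi KiR by simp
  have RQs': "R * Qs = Qs * R" unfolding Qs_def by (rule RQs)
  have RiQ: "Q * Ri = Ri * Q" by (rule invt_comm[OF iR RQ[symmetric]])
  have RiQs: "Qs * Ri = Ri * Qs" by (rule invt_comm[OF iR RQs'[symmetric]])
  have KiQ: "Q * Ki = Ki * Q" by (rule invt_comm[OF iK]) (simp add: algebra_simps RQ)
  have KiQs: "Qs * Ki = Ki * Qs" by (rule invt_comm[OF iK]) (simp add: algebra_simps RQs')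
  have KiRc: "R * Ki = Ki * R" by (rule invt_comm[OF iK]) (simp add: algebra_simps)
  have KiRi: "Ri * Ki = Ki * Ri" by (rule invt_comm[OF iK]) (simp add: algebra_simps RiR RRi)
  have Ris: "cstar Ri = Ri" by (rule invt_sa[OF iR Rs])
  have npRi: "np Ri" by (rule np_inv[OF npR iR])
  have rel1: "Qs * Q = R * R - Q * Qs + Q + Qs - 1"
    unfolding RR Qs_def[symmetric] by (simp add: algebra_simps QQ QsQs)
  have relK1: "R * Ki = 1 - Ki" using RKi by (simp add: algebra_simps)
  have relK2: "Ri * Ki = Ri - Ki"
  proof -
    have "(Ri * (1 + R)) * Ki = Ri" using RKi by (simp add: mult.assoc)
    moreover have "Ri * (1 + R) = Ri + 1" by (simp add: distrib_left RiR)
    ultimately have "(Ri + 1) * Ki = Ri" by simp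
    hence "Ri * Ki + Ki = Ri" by (simp add: distrib_right)
    thus ?thesis by (simp add: algebra_simps)
  qed
  note N0 = RQ[symmetric] RQs'[symmetric] RiQ KiQ RiQs KiQs KiRc[symmetric] KiRi[symmetric] QQ QsQs rel1 relK1 relK2 RRi RiR
  note N = N0 N0[THEN mult_assoc_rule] mult.assoc ring_distribs cQs Rs Ris cstar_mult cstar_add cstar_diff Qs_def[symmetric]
  define s where "s = Q * Qs * Ri"
  define sd where "sd = Q * Qs * Ri * Ri * Ri"
  define Kp where "Kp = Q * Qs * Ri * Ri * Ki + 1 - Q * Qs * Ri * Ri"
  have cabs: "cabs Qs = s"
  proof (rule cabs_eq)
    define g where "g = csqrt Ri"
    have gs: "cstar g = g" unfolding g_def by (rule csqrt_sa[OF npRi])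
    have gg: "g * g = Ri" unfolding g_def by (rule csqrt_sq[OF npRi])
    have "cstar (g * Qs) * (g * Qs) = Q * (g * g) * Qs" using gs by (simp add: cstar_mult cQs mult.assoc)
    also have "\<dots> = s" unfolding gg s_def using RiQs by (simp add: mult.assoc)
    finally show "cstar_positive s" unfolding cstar_positive_def by (intro exI[of _ "g * Qs"]) simp
    show "s * s = cstar Qs * Qs" unfolding s_def by (simp add: N)
  qed
  have mp: "mp_inv s = sd"
    by (rule mp_inv_eq) (simp_all add: s_def sd_def N)
  have ai: "ainv (s + 1) = Kp"
    by (rule ainv_eq) (simp_all add: s_def Kp_def N)
  have "matched_proj Q = (1/2) *\<^sub>R ((s + Qs) * sd * Kp * (s + Q))"
    unfolding matched_proj_def Qs_def[symmetric] cabs mp ai ..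
  also have "(s + Qs) * sd * Kp * (s + Q) = 1 + (Q + Qs - 1) * Ri"
    unfolding s_def sd_def Kp_def by (simp add: N)
  finally show ?thesis unfolding Qs_def .
qed

theorem proposition3p1:
  fixes Q :: "'a::cstar_algebra"
  assumes "Q * Q = Q"
  shows "matched_proj (1 - Q) = 1 - matched_proj Q"
proof -
  have QQ: "Q * Q = Q" by (rule assms)
  have QQz: "Q * (Q * z) = Q * z" for z by (rule mult_assoc_rule[OF QQ])
  define Qs where "Qs = cstar Q"
  have QsQs: "Qs * Qs = Qs" unfolding Qs_def using arg_cong[OF QQ, of cstar] by (simp add: cstar_mult)
  have QsQsz: "Qs * (Qs * z) = Qs * z" for z by (rule mult_assoc_rule[OF QsQs])
  define T where "T = Q + Qs - 1"
  define k where "k = ci (Q - Qs)"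
  have ks: "cstar k = k" unfolding k_def Qs_def by (simp add: cstar_invol)
  have TT: "T * T = 1 + k * k" unfolding T_def k_def by (simp add: algebra_simps QQ QsQs QQz QsQsz)
  have npTT: "np (T * T)" unfolding TT by (intro np_add np_one np_sq ks)
  define R where "R = csqrt (T * T)"
  have Rs: "cstar R = R" unfolding R_def by (rule csqrt_sa[OF npTT])
  have npR: "np R" unfolding R_def by (rule csqrt_np[OF npTT])
  have RR: "R * R = T * T" unfolding R_def by (rule csqrt_sq[OF npTT])
  have QTT: "Q * (T * T) = (T * T) * Q" unfolding T_def by (simp add: algebra_simps QQ QQz QsQs QsQsz)
  have Ts: "cstar T = T" unfolding T_def Qs_def by (simp add: cstar_add cstar_invol add.commute)
  have QsTT: "Qs * (T * T) = (T * T) * Qs"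
    using arg_cong[OF QTT, of cstar] by (simp add: cstar_mult Ts Qs_def[symmetric] mult.assoc)
  have RQ: "R * Q = Q * R" unfolding R_def using csqrt_comm[OF npTT QTT] by simp
  have RQs: "R * Qs = Qs * R" unfolding R_def using csqrt_comm[OF npTT QsTT] by simp
  obtain V where V: "invt (1 *\<^sub>R 1 + k * k) V" using np_plus_invt[OF np_sq[OF ks], of 1] by auto
  have V': "invt (T * T) V" using V TT by simp
  have RTT: "R * (T * T) = (T * T) * R" unfolding RR[symmetric] by (simp add: mult.assoc)
  have VR: "R * V = V * R" by (rule invt_comm[OF V' RTT])
  define Ri where "Ri = R * V"
  have RRi: "R * Ri = 1" unfolding Ri_def using V' RR unfolding invt_def by (simp add: mult.assoc[symmetric])
  have RiR: "Ri * R = 1" unfolding Ri_def using V' RR VR unfolding invt_def by (simp add: mult.assoc)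
  obtain Ki where Ki: "invt (1 *\<^sub>R 1 + R) Ki" using np_plus_invt[OF npR, of 1] by auto
  have RKi: "(1 + R) * Ki = 1" and KiR: "Ki * (1 + R) = 1" using Ki unfolding invt_def by auto
  have m1: "matched_proj Q = (1/2) *\<^sub>R (1 + T * Ri)"
    unfolding T_def Qs_def
    by (rule mformula[OF QQ Rs npR _ RQ _ RRi RiR RKi KiR])
       (use RR RQs in \<open>simp_all add: T_def Qs_def\<close>)
  have m2: "matched_proj (1 - Q) = (1/2) *\<^sub>R (1 + ((1 - Q) + cstar (1 - Q) - 1) * Ri)"
  proof (rule mformula[OF _ Rs npR _ _ _ RRi RiR RKi KiR])
    show "(1 - Q) * (1 - Q) = 1 - Q" by (simp add: algebra_simps QQ)
    have e: "1 - Q + cstar (1 - Q) - 1 = - T" unfolding T_def Qs_def by simp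
    show "R * R = (1 - Q + cstar (1 - Q) - 1) * (1 - Q + cstar (1 - Q) - 1)"
      unfolding e RR by simp
    show "R * (1 - Q) = (1 - Q) * R" using RQ by (simp add: algebra_simps)
    show "R * cstar (1 - Q) = cstar (1 - Q) * R" using RQs unfolding Qs_def by (simp add: algebra_simps)
  qed
  have "((1 - Q) + cstar (1 - Q) - 1) = - T" unfolding T_def Qs_def by simp
  hence "matched_proj (1 - Q) = (1/2) *\<^sub>R (1 - T * Ri)" using m2 by simp
  also have "\<dots> = 1 - (1/2) *\<^sub>R (1 + T * Ri)" by (simp add: algebra_simps scaleR_2[symmetric] flip: scaleR_add_left)
  finally show ?thesis using m1 by simp
qed

end
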